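(* Let $\Delta\in\mathcal L(X)$ on a Hilbert space $X$ be such that $(\Delta^k)_{k\in\mathbb N}$ is power bounded, and fix $x\in X$. (a) If $\|\Delta^kx\|=o(k^{-\delta})$ as $k\to\infty$ for some $0<\delta\le1/2$, then $\lim_{r\downarrow1}\Lambda_\delta(r)\int_0^{2\pi}\|R(re^{i\theta},\Delta)x\|^2\,d\theta=0.$ ( * ) (b) If ( * ) holds for some $0<\delta<1/2$, then $\|\Delta^kx\|=o(k^{-\delta})$ as $k\to\infty$; if ( * ) holds for $\delta=1/2$, then $\|\Delta^kx\|=o\big(\sqrt{\log k/k}\big)$ as $k\to\infty$.
   Context: $\Lambda_\delta(r)=(r-1)^{1-2\delta}$ if $0<\delta<1/2$ and $\Lambda_\delta(r)=|\log(r-1)|^{-1}$ if $\delta=1/2$ (for $r>1$). Power bounded means $\sup_k\|\Delta^k\|<\infty$ (so the spectral radius is $\le1$ and $R(z,\Delta)=(zI-\Delta)^{-1}$ exists for $|z|>1$). $h(k)=o(g(k))$ means: for every $\varepsilon>0$, $h(k)\le\varepsilon g(k)$ for all sufficiently large $k$. *)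

theory Defs
  imports "HOL-Analysis.Analysis"
begin

text \<open>A complex Hilbert space is modelled as a real Hilbert space (type class
  real_inner + complete_space) equipped with a complex structure J: a real-linear
  isometry with J (J x) = - x.  Multiplication by i is J; the complex inner product is
  inner x y + i * inner x (J y) (up to convention), whose norm is the given norm.\<close>

definition complex_structure :: "('a::real_inner \<Rightarrow> 'a) \<Rightarrow> bool" where
  "complex_structure J \<longleftrightarrow> linear J \<and> (\<forall>x. J (J x) = - x) \<and> (\<forall>x y. inner (J x) (J y) = inner x y)"

definition cscale :: "('a::real_vector \<Rightarrow> 'a) \<Rightarrow> complex \<Rightarrow> 'a \<Rightarrow> 'a" where
  "cscale J z x = Re z *\<^sub>R x + Im z *\<^sub>R J x"

definition complex_linear_op :: "('a::real_normed_vector \<Rightarrow> 'a) \<Rightarrow> ('a \<Rightarrow>\<^sub>L 'a) \<Rightarrow> bool" where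
  "complex_linear_op J D \<longleftrightarrow> (\<forall>x. D (J x) = J (D x))"

definition power_bounded :: "('a::real_normed_vector \<Rightarrow>\<^sub>L 'a) \<Rightarrow> bool" where
  "power_bounded D \<longleftrightarrow> (\<exists>C. \<forall>k x. norm ((blinfun_apply D ^^ k) x) \<le> C * norm x)"

text \<open>Resolvent R(z,D) x = (z I - D)^{-1} x (well defined for |z| > 1 when D is power bounded).\<close>
definition resolvent :: "('a::real_normed_vector \<Rightarrow> 'a) \<Rightarrow> complex \<Rightarrow> ('a \<Rightarrow>\<^sub>L 'a) \<Rightarrow> 'a \<Rightarrow> 'a" where
  "resolvent J z D x = (THE y. cscale J z y - D y = x)"

definition Lambda :: "real \<Rightarrow> real \<Rightarrow> real" where
  "Lambda \<delta> r = (if \<delta> = 1/2 then 1 / \<bar>ln (r - 1)\<bar> else (r - 1) powr (1 - 2 * \<delta>))"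

definition little_o :: "(nat \<Rightarrow> real) \<Rightarrow> (nat \<Rightarrow> real) \<Rightarrow> bool" where
  "little_o h g \<longleftrightarrow> (\<forall>\<epsilon>>0. eventually (\<lambda>k. h k \<le> \<epsilon> * g k) sequentially)"

definition resolvent_cond :: "('a::real_inner \<Rightarrow> 'a) \<Rightarrow> ('a \<Rightarrow>\<^sub>L 'a) \<Rightarrow> 'a \<Rightarrow> real \<Rightarrow> bool" where
  "resolvent_cond J D x \<delta> \<longleftrightarrow>
     ((\<lambda>r. Lambda \<delta> r * integral {0..2*pi}
          (\<lambda>\<theta>. (norm (resolvent J (complex_of_real r * cis \<theta>) D x))\<^sup>2)) \<longlongrightarrow> 0) (at_right 1)"

end

theory Submission
  imports Defs "HOL-Analysis.Analysis"
begin

lemma summable_norm_cancel_hs: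
  fixes f :: "nat \<Rightarrow> 'a::{real_normed_vector,complete_space}"
  assumes a: "summable (\<lambda>n. norm (f n))" shows "summable f"
proof -
  have r: "\<forall>e>0. \<exists>N. \<forall>m\<ge>N. \<forall>n. norm (sum f {m..<n}) < e"
  proof (intro allI impI)
    fix e :: real assume "e > 0"
    then obtain N where N: "\<forall>m\<ge>N. \<forall>n. norm (\<Sum>k=m..<n. norm (f k)) < e"
      using a unfolding summable_Cauchy by blast
    have "norm (sum f {m..<n}) < e" if "m \<ge> N" for m n
    proof -
      have "norm (sum f {m..<n}) \<le> (\<Sum>k=m..<n. norm (f k))" by (rule norm_sum)
      also have "\<dots> \<le> norm (\<Sum>k=m..<n. norm (f k))" by simp
      also have "\<dots> < e" using N that by blast
      finally show ?thesis .
    qed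
    thus "\<exists>N. \<forall>m\<ge>N. \<forall>n. norm (sum f {m..<n}) < e" by blast
  qed
  then show "summable f"
    unfolding summable_iff_convergent Cauchy_convergent_iff [symmetric] Cauchy_iff
  proof clarify
    fix e :: real
    assume "0 < e"
    with r obtain N where N: "\<And>m n. m \<ge> N \<Longrightarrow> norm (sum f {m..<n}) < e"
      by blast
    have d: "sum f {..<q} - sum f {..<p} = sum f {p..<q}" if "p \<le> q" for p q
      using sum_diff_nat_ivl[of 0 p q f] that by (simp add: atLeast0LessThan)
    have "norm (sum f {..<m} - sum f {..<n}) < e" if "m\<ge>N" "n\<ge>N" for m n
    proof (cases m n rule: linorder_class.le_cases)
      assume "m \<le> n"
      then have "norm (sum f {..<m} - sum f {..<n}) = norm (sum f {m..<n})"
        using d[of m n] norm_minus_commute by metis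
      then show ?thesis using N that by simp
    next
      assume "n \<le> m"
      then have "norm (sum f {..<m} - sum f {..<n}) = norm (sum f {n..<m})"
        using d[of n m] by simp
      then show ?thesis using N that by simp
    qed
    then show "\<exists>M. \<forall>m\<ge>M. \<forall>n\<ge>M. norm (sum f {..<m} - sum f {..<n}) < e"
      by blast
  qed
qed

lemma summable_comparison_hs:
  fixes f :: "nat \<Rightarrow> 'a::{real_normed_vector,complete_space}"
  assumes "summable g" "\<And>n. norm (f n) \<le> g n" shows "summable f"
  apply (rule summable_norm_cancel_hs)
  apply (rule summable_comparison_test'[where N=0, OF assms(1)])
  using assms(2) by simp

lemma norm_suminf_le_hs:
  fixes f :: "nat \<Rightarrow> 'a::{real_normed_vector,complete_space}"
  assumes "summable g" "\<And>n. norm (f n) \<le> g n" shows "norm (suminf f) \<le> suminf g"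
proof -
  have s: "summable (\<lambda>n. norm (f n))"
    by (rule summable_comparison_test'[where N=0, OF assms(1)]) (use assms(2) in simp)
  have "norm (suminf f) \<le> (\<Sum>n. norm (f n))"
  proof (rule LIMSEQ_le)
    show "(\<lambda>n. norm (sum f {..<n})) \<longlonglongrightarrow> norm (suminf f)"
      by (intro tendsto_norm summable_LIMSEQ summable_norm_cancel_hs[OF s])
    show "(\<lambda>n. \<Sum>k<n. norm (f k)) \<longlonglongrightarrow> (\<Sum>n. norm (f n))"
      by (intro summable_LIMSEQ s)
    show "\<exists>N. \<forall>n\<ge>N. norm (sum f {..<n}) \<le> (\<Sum>k<n. norm (f k))"
      by (rule exI[of _ 0]) (simp add: norm_sum)
  qed
  also have "\<dots> \<le> suminf g" by (rule suminf_le[OF assms(2) s assms(1)])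
  finally show ?thesis .
qed

locale hs =
  fixes J :: "'a::{real_inner, complete_space} \<Rightarrow> 'a" and D :: "'a \<Rightarrow>\<^sub>L 'a" and x :: 'a and C :: real
  assumes cs: "complex_structure J" and cl: "complex_linear_op J D"
    and pb: "\<And>k y. norm ((blinfun_apply D ^^ k) y) \<le> C * norm y" and C1: "C \<ge> 1"
begin

lemma Jlin: "linear J" using cs unfolding complex_structure_def by auto
lemma JJ[simp]: "J (J v) = - v" using cs unfolding complex_structure_def by auto
lemma Jinner: "inner (J u) (J v) = inner u v" using cs unfolding complex_structure_def by auto
lemma Jadd[simp]: "J (u + v) = J u + J v" using Jlin by (simp add: linear_add)
lemma Jscale[simp]: "J (a *\<^sub>R u) = a *\<^sub>R J u" using Jlin by (simp add: linear_scale)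
lemma Jdiff[simp]: "J (u - v) = J u - J v" using Jlin by (simp add: linear_diff)
lemma Jneg[simp]: "J (- u) = - J u" using Jlin by (simp add: linear_neg)
lemma J0[simp]: "J 0 = 0" using Jlin by (simp add: linear_0)
lemma Jnorm[simp]: "norm (J u) = norm u"
  by (simp add: norm_eq_sqrt_inner Jinner)
lemma Jskew: "inner (J u) v = - inner u (J v)"
  using Jinner[of "J u" v] by simp
lemma inner_J_self[simp]: "inner u (J u) = 0"
  using Jskew[of u u] by (simp add: inner_commute)
lemma Jbl: "bounded_linear J"
  by (rule bounded_linear_intro[where K=1]) auto

abbreviation c where "c \<equiv> cscale J"

lemma c_mult: "c (z * w) v = c z (c w v)"
  by (simp add: cscale_def algebra_simps)
lemma c_one[simp]: "c 1 v = v" by (simp add: cscale_def)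
lemma c_add_left: "c z (u + v) = c z u + c z v" by (simp add: cscale_def algebra_simps)
lemma c_diff_left: "c z (u - v) = c z u - c z v" by (simp add: cscale_def algebra_simps)
lemma c_bl: "bounded_linear (c z)"
  unfolding cscale_def
  by (intro bounded_linear_add bounded_linear_scaleR_right bounded_linear_ident
     bounded_linear_compose[OF bounded_linear_scaleR_right Jbl])
lemma c_norm: "norm (c z v) = cmod z * norm v"
proof -
  have "(norm (c z v))^2 = inner (c z v) (c z v)" by (simp add: power2_norm_eq_inner)
  also have "\<dots> = ((Re z)^2 + (Im z)^2) * inner v v"
    unfolding cscale_def
    by (simp add: inner_add_left inner_add_right Jinner Jskew[of v v] inner_commute[of "J v" v]
       algebra_simps power2_eq_square)
  also have "\<dots> = (cmod z * norm v)^2"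
    by (simp add: cmod_power2 power_mult_distrib power2_norm_eq_inner)
  finally show ?thesis by (simp add: power2_eq_iff_nonneg)
qed
lemma Dc: "D (c z v) = c z (D v)"
  using cl unfolding complex_linear_op_def cscale_def
  by (simp add: blinfun.add_right blinfun.scaleR_right)
lemma Dpow_c: "(blinfun_apply D ^^ k) (c z v) = c z ((blinfun_apply D ^^ k) v)"
  by (induction k) (simp_all add: Dc)



definition u where "u k = (blinfun_apply D ^^ k) x"
definition tm where "tm z k = c (inverse z ^ Suc k) (u k)"

lemma u_bound: "norm (u k) \<le> C * norm x" unfolding u_def by (rule pb)
lemma u_mono: "k \<le> n \<Longrightarrow> norm (u n) \<le> C * norm (u k)"
proof -
  assume "k \<le> n"
  then obtain m where "n = m + k" by (metis add.commute le_add_diff_inverse)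
  hence "u n = (blinfun_apply D ^^ m) (u k)" unfolding u_def by (simp add: funpow_add)
  thus ?thesis using pb by simp
qed

lemma tm_norm: "norm (tm z k) = (inverse (cmod z))^Suc k * norm (u k)"
  unfolding tm_def by (simp add: c_norm norm_power norm_inverse norm_mult)

lemma tm_bound: "norm (tm z k) \<le> (inverse (cmod z))^Suc k * (C * norm x)"
  unfolding tm_norm by (intro mult_left_mono u_bound) simp

lemma geo_summ: "cmod z > 1 \<Longrightarrow> summable (\<lambda>k. (inverse (cmod z))^Suc k * (C * norm x))"
  apply (intro summable_mult2)
  apply (subst power_Suc)
  apply (intro summable_mult summable_geometric)
  by (auto simp: inverse_less_1_iff)

lemma tm_summable: assumes "cmod z > 1" shows "summable (tm z)"
  by (rule summable_comparison_hs[OF geo_summ[OF assms] tm_bound])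

lemma D_tm: "D (tm z k) = c (inverse z ^ Suc k) (u (Suc k))"
  unfolding tm_def u_def by (simp add: Dc)

lemma neumann: assumes "cmod z > 1" shows "c z (suminf (tm z)) - D (suminf (tm z)) = x"
proof -
  define f where "f k = c (inverse z ^ k) (u k)" for k
  have z0: "z \<noteq> 0" using assms by auto
  have s: "summable (tm z)" using tm_summable[OF assms] .
  have eqf: "c z (tm z k) = f k" for k
    by (simp add: tm_def f_def c_mult[symmetric] z0 mult.assoc[symmetric])
  have 1: "c z (suminf (tm z)) = suminf f"
    using bounded_linear.suminf[OF c_bl s, of z] by (simp add: eqf)
  have 2: "D (suminf (tm z)) = (\<Sum>k. f (Suc k))"
    using bounded_linear.suminf[OF blinfun.bounded_linear_right s, of D]
    by (simp add: D_tm f_def)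
  have fe: "f = (\<lambda>k. c z (tm z k))" by (rule ext) (simp add: eqf)
  have sf: "summable f" unfolding fe by (rule bounded_linear.summable[OF c_bl s])
  have "(\<Sum>k. f (Suc k)) = suminf f - f 0" by (rule suminf_split_head[OF sf])
  moreover have "f 0 = x" by (simp add: f_def u_def)
  ultimately show ?thesis using 1 2 by simp
qed

lemma uniq0: assumes "cmod z > 1" "c z v = D v" shows "v = 0"
proof -
  have z0: "z \<noteq> 0" using assms by auto
  have v1: "v = c (inverse z) (D v)"
    using assms(2) by (metis c_mult c_one left_inverse z0)
  have vn: "v = c (inverse z ^ n) ((blinfun_apply D ^^ n) v)" for n
  proof (induction n)
    case (Suc n)
    have "v = c (inverse z) (D v)" by (rule v1)
    also have "\<dots> = c (inverse z) (D (c (inverse z ^ n) ((blinfun_apply D ^^ n) v)))"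
      using Suc by simp
    also have "\<dots> = c (inverse z ^ Suc n) ((blinfun_apply D ^^ Suc n) v)"
      by (simp add: Dc c_mult)
    finally show ?case .
  qed simp
  have le: "norm v \<le> (inverse (cmod z))^n * (C * norm v)" for n
  proof -
    have "norm v = (inverse (cmod z))^n * norm ((blinfun_apply D ^^ n) v)"
      by (subst vn[of n]) (simp add: c_norm norm_power norm_inverse)
    also have "\<dots> \<le> (inverse (cmod z))^n * (C * norm v)"
      by (intro mult_left_mono pb) simp
    finally show ?thesis .
  qed
  have "(\<lambda>n. (inverse (cmod z))^n * (C * norm v)) \<longlonglongrightarrow> 0 * (C * norm v)"
    by (intro tendsto_mult LIMSEQ_realpow_zero tendsto_const) (use assms in \<open>auto simp: inverse_less_1_iff\<close>)
  hence "norm v \<le> 0" using le by (intro LIMSEQ_le_const) (auto intro: exI[of _ 0])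
  thus ?thesis by simp
qed

lemma resolvent_eq: assumes "cmod z > 1" shows "resolvent J z D x = suminf (tm z)"
  unfolding resolvent_def
proof (rule the1_equality)
  show "c z (suminf (tm z)) - D (suminf (tm z)) = x" by (rule neumann[OF assms])
  show "\<exists>!y. c z y - D y = x"
  proof (rule ex1I[of _ "suminf (tm z)"])
    fix y assume "c z y - D y = x"
    hence "c z (y - suminf (tm z)) = D (y - suminf (tm z))"
      using neumann[OF assms] by (simp add: c_diff_left blinfun.diff_right algebra_simps)
    thus "y = suminf (tm z)" using uniq0[OF assms] by fastforce
  qed (rule neumann[OF assms])
qed

end

lemma int_cos: assumes "m \<in> \<int>"
  shows "((\<lambda>t. cos (m * t)) has_integral (if m = 0 then 2*pi else 0)) {0..2*pi}"
proof (cases "m = 0")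
  case True then show ?thesis using has_integral_const_real[of "1::real" 0 "2*pi"] by (simp add: real_scaleR_def)
next
  case False
  have "((\<lambda>t. cos (m * t)) has_integral ((\<lambda>t. sin (m * t) / m) (2*pi) - (\<lambda>t. sin (m * t) / m) 0)) {0..2*pi}"
  proof (rule fundamental_theorem_of_calculus)
    fix t :: real
    have "((\<lambda>t. sin (m * t) / m) has_real_derivative cos (m * t)) (at t within {0..2*pi})"
      by (rule derivative_eq_intros refl | use False in simp)+
    thus "((\<lambda>t. sin (m * t) / m) has_vector_derivative cos (m * t)) (at t within {0..2*pi})"
      by (simp add: has_real_derivative_iff_has_vector_derivative)
  qed simp
  moreover have "sin (m * (2*pi)) = 0" using sin_integer_2pi[OF assms] by (simp add: mult_ac)
  ultimately show ?thesis using False by simp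
qed

lemma int_sin: assumes "m \<in> \<int>"
  shows "((\<lambda>t. sin (m * t)) has_integral 0) {0..2*pi}"
proof (cases "m = 0")
  case True then show ?thesis by simp
next
  case False
  have "((\<lambda>t. sin (m * t)) has_integral ((\<lambda>t. - cos (m * t) / m) (2*pi) - (\<lambda>t. - cos (m * t) / m) 0)) {0..2*pi}"
  proof (rule fundamental_theorem_of_calculus)
    fix t :: real
    have "((\<lambda>t. - cos (m * t) / m) has_real_derivative sin (m * t)) (at t within {0..2*pi})"
      by (rule derivative_eq_intros refl | use False in simp)+
    thus "((\<lambda>t. - cos (m * t) / m) has_vector_derivative sin (m * t)) (at t within {0..2*pi})"
      by (simp add: has_real_derivative_iff_has_vector_derivative)
  qed simp
  moreover have "cos (m * (2*pi)) = 1" using cos_integer_2pi[OF assms] by (simp add: mult_ac)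
  ultimately show ?thesis using False by simp
qed

context hs begin
lemma inner_rot: "inner (\<alpha> *\<^sub>R (p1 *\<^sub>R v - q1 *\<^sub>R J v)) (\<beta> *\<^sub>R (p2 *\<^sub>R w - q2 *\<^sub>R J w))
   = \<alpha>*\<beta>*((p1*p2 + q1*q2) * inner v w + (q1*p2 - p1*q2) * inner v (J w))"
proof -
  have "inner (\<alpha> *\<^sub>R (p1 *\<^sub>R v - q1 *\<^sub>R J v)) (\<beta> *\<^sub>R (p2 *\<^sub>R w - q2 *\<^sub>R J w))
    = \<alpha>*\<beta>*(p1*p2*inner v w - p1*q2*inner v (J w) - q1*p2*inner (J v) w + q1*q2*inner (J v) (J w))"
    by (simp add: inner_diff_left inner_diff_right algebra_simps)
  also have "\<dots> = \<alpha>*\<beta>*((p1*p2 + q1*q2) * inner v w + (q1*p2 - p1*q2) * inner v (J w))"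
    unfolding Jinner Jskew[of v w] by (simp add: algebra_simps)
  finally show ?thesis .
qed

definition g where
  "g r k t = (inverse r)^Suc k *\<^sub>R (cos (real (Suc k) * t) *\<^sub>R u k - sin (real (Suc k) * t) *\<^sub>R J (u k))"

lemma inner_g: "inner (g r j t) (g r k t) = (inverse r)^Suc j * (inverse r)^Suc k *
   (cos ((real j - real k) * t) * inner (u j) (u k) + sin ((real j - real k) * t) * inner (u j) (J (u k)))"
proof -
  have e: "(real j - real k) * t = real (Suc j) * t - real (Suc k) * t" by (simp add: algebra_simps)
  show ?thesis unfolding e cos_diff sin_diff g_def inner_rot
    by (simp add: algebra_simps)
qed

lemma int_inner_g: "((\<lambda>t. inner (g r j t) (g r k t)) has_integral
   (if j = k then 2 * pi * (inverse r)^(2*k+2) * (norm (u k))^2 else 0)) {0..2*pi}"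
proof -
  define m where "m = real j - real k"
  define A where "A = (inverse r)^Suc j * (inverse r)^Suc k * inner (u j) (u k)"
  define B where "B = (inverse r)^Suc j * (inverse r)^Suc k * inner (u j) (J (u k))"
  have Z: "m \<in> \<int>" unfolding m_def by simp
  have i1: "((\<lambda>t. A * cos (m * t) + B * sin (m * t))
     has_integral (A * (if m = 0 then 2*pi else 0) + B * 0)) {0..2*pi}"
    by (intro has_integral_add has_integral_mult_right int_cos int_sin Z)
  have e1: "inner (g r j t) (g r k t) = A * cos (m * t) + B * sin (m * t)" for t
    unfolding inner_g A_def B_def m_def by (simp add: distrib_left mult_ac)
  have e2: "A * (if m = 0 then 2*pi else 0) + B * 0 = (if j = k then 2 * pi * (inverse r)^(2*k+2) * (norm (u k))^2 else 0)"
  proof (cases "j = k")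
    case True
    have "(inverse r)^(2*k+2) = (inverse r)^Suc k * (inverse r)^Suc k"
      by (simp add: power_add[symmetric] mult_2)
    then show ?thesis using True unfolding A_def m_def by (simp only: power2_norm_eq_inner) simp
  next
    case False then show ?thesis unfolding m_def by simp
  qed
  show ?thesis using i1 unfolding e1 e2 .
qed

lemma int_S: "((\<lambda>t. (norm (\<Sum>k<N. g r k t))^2) has_integral
   (2 * pi * (\<Sum>k<N. (inverse r)^(2*k+2) * (norm (u k))^2))) {0..2*pi}"
proof -
  have e: "(norm (\<Sum>k<N. g r k t))^2 = (\<Sum>j<N. \<Sum>k<N. inner (g r j t) (g r k t))" for t
    by (simp add: power2_norm_eq_inner inner_sum_left inner_sum_right) (rule sum.swap)
  have "((\<lambda>t. \<Sum>j<N. \<Sum>k<N. inner (g r j t) (g r k t)) has_integral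
     (\<Sum>j<N. \<Sum>k<N. (if j = k then 2 * pi * (inverse r)^(2*k+2) * (norm (u k))^2 else 0))) {0..2*pi}"
    by (intro has_integral_sum finite_lessThan int_inner_g)
  moreover have "(\<Sum>j<N. \<Sum>k<N. (if j = k then 2 * pi * (inverse r)^(2*k+2) * (norm (u k))^2 else 0))
      = 2 * pi * (\<Sum>k<N. (inverse r)^(2*k+2) * (norm (u k))^2)"
    unfolding sum_distrib_left by (rule sum.cong[OF refl]) simp
  ultimately show ?thesis unfolding e by simp
qed

end

context hs begin

lemma tm_g: assumes "r > 0" shows "tm (complex_of_real r * cis t) k = g r k t"
proof -
  have i: "inverse (complex_of_real r * cis t) = complex_of_real (inverse r) * cis (-t)"
    by (simp add: inverse_mult_distrib of_real_inverse)
  have "inverse (complex_of_real r * cis t) ^ Suc k = complex_of_real ((inverse r)^Suc k) * cis (real (Suc k) * (-t))"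
    unfolding i power_mult_distrib Complex.DeMoivre of_real_power ..
  note p = this
  have re: "Re (complex_of_real a * cis b) = a * cos b" for a b by simp
  have im: "Im (complex_of_real a * cis b) = a * sin b" for a b by simp
  show ?thesis unfolding tm_def g_def cscale_def p re im
    by (simp add: scaleR_diff_right)
qed

definition Mb where "Mb r = (\<Sum>k. (inverse r)^Suc k * (C * norm x))"
definition G where "G r = (\<Sum>k. (inverse r)^(2*k+2) * (norm (u k))^2)"

lemma cm: "r > 1 \<Longrightarrow> cmod (complex_of_real r * cis t) = r"
  by (simp add: norm_mult)

lemma g_bound: "r > 1 \<Longrightarrow> norm (g r k t) \<le> (inverse r)^Suc k * (C * norm x)"
  using tm_bound[of "complex_of_real r * cis t" k] tm_g[of r t k] cm[of r t] by simp

lemma geo_r: "r > 1 \<Longrightarrow> summable (\<lambda>k. (inverse r)^Suc k * (C * norm x))"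
  using geo_summ[of "complex_of_real r * cis 0"] cm[of r 0] by simp

lemma g_summable: "r > 1 \<Longrightarrow> summable (\<lambda>k. g r k t)"
  by (rule summable_comparison_hs[OF geo_r g_bound])

lemma res_g: "r > 1 \<Longrightarrow> resolvent J (complex_of_real r * cis t) D x = (\<Sum>k. g r k t)"
proof -
  assume r: "r > 1"
  have "tm (complex_of_real r * cis t) = (\<lambda>k. g r k t)" by (rule ext) (rule tm_g, use r in simp)
  thus ?thesis using resolvent_eq[of "complex_of_real r * cis t"] cm[OF r, of t] r by simp
qed

lemma tail_bound: assumes "r > 1"
  shows "norm ((\<Sum>k. g r k t) - (\<Sum>k<N. g r k t)) \<le> (inverse r)^N * Mb r"
proof -
  have "(\<Sum>k. g r k t) - (\<Sum>k<N. g r k t) = (\<Sum>k. g r (k + N) t)"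
    using suminf_split_initial_segment[OF g_summable[OF assms], where k=N] by simp
  also have "norm \<dots> \<le> (\<Sum>k. (inverse r)^N * ((inverse r)^Suc k * (C * norm x)))"
  proof (rule norm_suminf_le_hs)
    show "summable (\<lambda>k. (inverse r)^N * ((inverse r)^Suc k * (C * norm x)))"
      by (intro summable_mult geo_r assms)
    fix k show "norm (g r (k + N) t) \<le> (inverse r)^N * ((inverse r)^Suc k * (C * norm x))"
      using g_bound[OF assms, of "k+N" t] by (simp add: power_add mult_ac)
  qed
  also have "\<dots> = (inverse r)^N * Mb r" unfolding Mb_def
    by (rule suminf_mult[OF geo_r[OF assms]])
  finally show ?thesis .
qed

lemma Mb_nonneg: "r > 1 \<Longrightarrow> 0 \<le> Mb r"
  unfolding Mb_def using C1 by (intro suminf_nonneg geo_r) auto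

lemma Y_bound: assumes "r > 1" shows "norm (\<Sum>k. g r k t) \<le> Mb r"
  unfolding Mb_def by (rule norm_suminf_le_hs[OF geo_r[OF assms] g_bound[OF assms]])

lemma S_bound: assumes "r > 1" shows "norm (\<Sum>k<N. g r k t) \<le> Mb r"
proof -
  have "norm (\<Sum>k<N. g r k t) \<le> (\<Sum>k<N. norm (g r k t))" by (rule norm_sum)
  also have "\<dots> \<le> (\<Sum>k<N. (inverse r)^Suc k * (C * norm x))"
    by (intro sum_mono g_bound assms)
  also have "\<dots> \<le> Mb r" unfolding Mb_def
    using C1 assms by (intro sum_le_suminf geo_r assms) auto
  finally show ?thesis .
qed

lemma sq_diff: "\<bar>(norm a)^2 - (norm b)^2\<bar> \<le> 2 * M * norm (a - b)"
  if "norm a \<le> M" "norm b \<le> M" for a b :: 'a and M :: real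
proof -
  have "(norm a)^2 - (norm b)^2 = (norm a - norm b) * (norm a + norm b)"
    by (simp add: power2_eq_square algebra_simps)
  hence "\<bar>(norm a)^2 - (norm b)^2\<bar> = \<bar>norm a - norm b\<bar> * (norm a + norm b)"
    by (simp add: abs_mult)
  also have "\<dots> \<le> norm (a - b) * (2 * M)"
    by (intro mult_mono norm_triangle_ineq3) (use that in auto)
  finally show ?thesis by (simp add: mult_ac)
qed

lemma G_summable: "r > 1 \<Longrightarrow> summable (\<lambda>k. (inverse r)^(2*k+2) * (norm (u k))^2)"
proof -
  assume r: "r > 1"
  have "summable (\<lambda>k. (inverse r)^Suc k * (C * norm x) * (C * norm x))"
    by (intro summable_mult2 geo_r r)
  then show ?thesis
  proof (rule summable_comparison_test'[where N=0])
    fix k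
    have ir: "0 \<le> inverse r" "inverse r \<le> 1" using r by (auto simp: inverse_le_1_iff)
    have "(inverse r)^(2*k+2) \<le> (inverse r)^Suc k" by (rule power_decreasing) (use ir in auto)
    moreover have "(norm (u k))^2 \<le> (C * norm x) * (C * norm x)"
      using u_bound[of k] C1 unfolding power2_eq_square by (intro mult_mono) auto
    ultimately have "(inverse r)^(2*k+2) * (norm (u k))^2 \<le> (inverse r)^Suc k * ((C * norm x) * (C * norm x))"
      using ir by (intro mult_mono) auto
    then show "norm ((inverse r)^(2*k+2) * (norm (u k))^2) \<le> (inverse r)^Suc k * (C * norm x) * (C * norm x)"
      using ir by (simp add: mult_ac)
  qed
qed

lemma key: assumes r: "r > 1"
  shows "integral {0..2*pi} (\<lambda>t. (norm (resolvent J (complex_of_real r * cis t) D x))^2) = 2 * pi * G r"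
proof -
  define h where "h t = (norm (\<Sum>k. g r k t))^2" for t
  define P where "P N = (\<Sum>k<N. (inverse r)^(2*k+2) * (norm (u k))^2)" for N
  define e where "e N = 2 * Mb r * ((inverse r)^N * Mb r)" for N
  have hs: "\<bar>h t - (norm (\<Sum>k<N. g r k t))^2\<bar> \<le> e N" for t N
  proof -
    have "\<bar>h t - (norm (\<Sum>k<N. g r k t))^2\<bar> \<le> 2 * Mb r * norm ((\<Sum>k. g r k t) - (\<Sum>k<N. g r k t))"
      unfolding h_def by (rule sq_diff[OF Y_bound[OF r] S_bound[OF r]])
    also have "\<dots> \<le> e N" unfolding e_def
      using Mb_nonneg[OF r] by (intro mult_left_mono tail_bound r) auto
    finally show ?thesis .
  qed
  have e0: "e \<longlonglongrightarrow> 0"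
  proof -
    have "(\<lambda>N. 2 * Mb r * ((inverse r)^N * Mb r)) \<longlonglongrightarrow> 2 * Mb r * (0 * Mb r)"
      by (intro tendsto_mult tendsto_const LIMSEQ_realpow_zero) (use r in \<open>auto simp: inverse_less_1_iff\<close>)
    thus ?thesis unfolding e_def by simp
  qed
  have enn: "0 \<le> e N" for N unfolding e_def using Mb_nonneg[OF r] r by auto
  have hint: "h integrable_on {0..2*pi}"
  proof -
    have "h integrable_on cbox 0 (2*pi)"
    proof (rule integrable_uniform_limit)
      fix \<epsilon> :: real assume "\<epsilon> > 0"
      then obtain N where "e N < \<epsilon>" using order_tendstoD(2)[OF e0 \<open>\<epsilon> > 0\<close>]
        by (auto simp: eventually_sequentially)
      show "\<exists>f. (\<forall>t\<in>cbox 0 (2*pi). norm (h t - f t) \<le> \<epsilon>) \<and> f integrable_on cbox 0 (2*pi)"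
      proof (intro exI conjI ballI)
        show "(\<lambda>t. (norm (\<Sum>k<N. g r k t))^2) integrable_on cbox 0 (2*pi)"
          using int_S[where N=N and r=r] by (auto simp: integrable_on_def)
        fix t show "norm (h t - (norm (\<Sum>k<N. g r k t))^2) \<le> \<epsilon>"
          using hs[of t N] \<open>e N < \<epsilon>\<close> by simp
      qed
    qed
    thus ?thesis by simp
  qed
  have diff: "\<bar>integral {0..2*pi} h - 2 * pi * P N\<bar> \<le> e N * (2 * pi)" for N
  proof -
    have "((\<lambda>t. h t - (norm (\<Sum>k<N. g r k t))^2) has_integral (integral {0..2*pi} h - 2 * pi * P N)) {0..2*pi}"
      unfolding P_def by (intro has_integral_diff integrable_integral hint int_S)
    hence "norm (integral {0..2*pi} h - 2 * pi * P N) \<le> e N * (2 * pi)"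
      by (rule has_integral_bound_real[OF enn finite.emptyI, THEN order_trans]) (use hs in auto)
    thus ?thesis by simp
  qed
  have l1: "(\<lambda>N. 2 * pi * P N) \<longlonglongrightarrow> integral {0..2*pi} h"
  proof -
    have "(\<lambda>N. 2 * pi * P N - integral {0..2*pi} h) \<longlonglongrightarrow> 0"
    proof (rule Lim_null_comparison)
      show "\<forall>\<^sub>F N in sequentially. norm (2 * pi * P N - integral {0..2*pi} h) \<le> e N * (2*pi)"
        using diff by (simp add: abs_minus_commute)
      show "(\<lambda>N. e N * (2*pi)) \<longlonglongrightarrow> 0" using tendsto_mult_left_zero[OF e0] by simp
    qed
    thus ?thesis by (simp add: LIM_zero_cancel)
  qed
  have l2: "(\<lambda>N. 2 * pi * P N) \<longlonglongrightarrow> 2 * pi * G r"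
    unfolding P_def G_def
    by (intro tendsto_mult_left summable_LIMSEQ G_summable r)
  have "integral {0..2*pi} h = 2 * pi * G r" using LIMSEQ_unique[OF l1 l2] .
  moreover have "(\<lambda>t. (norm (resolvent J (complex_of_real r * cis t) D x))^2) = h"
    unfolding h_def using res_g[OF r] by auto
  ultimately show ?thesis by simp
qed

end

context hs begin

lemma G_nonneg: "r > 1 \<Longrightarrow> 0 \<le> G r"
  unfolding G_def by (intro suminf_nonneg G_summable) auto

lemma LB: assumes n: "n \<ge> 1" shows "(norm (u n))^2 \<le> 9 * C^2 * G (1 + 1 / real n) / real n"
proof -
  define r where "r = 1 + 1 / real n"
  have r1: "r > 1" unfolding r_def using n by simp
  have ir: "0 \<le> inverse r" "inverse r \<le> 1" using r1 by (auto simp: inverse_le_1_iff)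
  have step: "(inverse r)^(2*n) * (norm (u n))^2 \<le> C^2 * ((inverse r)^(2*k+2) * (norm (u k))^2)" if "k < n" for k
  proof -
    have "(inverse r)^(2*n) \<le> (inverse r)^(2*k+2)" by (rule power_decreasing) (use that ir in auto)
    moreover have "(norm (u n))^2 \<le> (C * norm (u k))^2"
      using u_mono[of k n] that by (intro power_mono) auto
    ultimately have "(inverse r)^(2*n) * (norm (u n))^2 \<le> (inverse r)^(2*k+2) * (C * norm (u k))^2"
      using ir by (intro mult_mono) auto
    thus ?thesis by (simp add: power_mult_distrib mult_ac)
  qed
  have "real n * ((inverse r)^(2*n) * (norm (u n))^2) = (\<Sum>k<n. (inverse r)^(2*n) * (norm (u n))^2)"
    by simp
  also have "\<dots> \<le> (\<Sum>k<n. C^2 * ((inverse r)^(2*k+2) * (norm (u k))^2))"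
    by (intro sum_mono step) auto
  also have "\<dots> = C^2 * (\<Sum>k<n. (inverse r)^(2*k+2) * (norm (u k))^2)" by (simp add: sum_distrib_left)
  also have "\<dots> \<le> C^2 * G r" unfolding G_def
    using r1 by (intro mult_left_mono sum_le_suminf G_summable r1) auto
  finally have A: "real n * ((inverse r)^(2*n) * (norm (u n))^2) \<le> C^2 * G r" .
  have "r ^ n \<le> exp 1"
  proof -
    have "r \<le> exp (1 / real n)" unfolding r_def using exp_ge_add_one_self[of "1 / real n"] by simp
    hence "r ^ n \<le> exp (1 / real n) ^ n" using r1 by (intro power_mono) auto
    also have "\<dots> = exp 1" using n by (simp add: exp_of_nat_mult[symmetric])
    finally show ?thesis .
  qed
  hence "r ^ n \<le> 3" using exp_le by linarith
  hence "(r ^ n)^2 \<le> 3^2" using r1 by (intro power_mono) auto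
  hence r9: "r ^ (2*n) \<le> 9" by (simp add: power_mult[symmetric] mult.commute)
  have "1/9 \<le> (inverse r)^(2*n)"
    using r9 r1 by (simp add: power_inverse field_simps)
  hence "real n * (norm (u n))^2 * (1/9) \<le> real n * (norm (u n))^2 * (inverse r)^(2*n)"
    by (intro mult_left_mono) auto
  also have "\<dots> \<le> C^2 * G r" using A by (simp add: mult_ac)
  finally have "real n * (norm (u n))^2 \<le> 9 * C^2 * G r" by simp
  thus ?thesis unfolding r_def using n by (simp add: field_simps)
qed

end

lemma rn_filterlim: "filterlim (\<lambda>n. 1 + 1 / real n) (at_right 1) sequentially"
proof (rule tendsto_imp_filterlim_at_right)
  show "((\<lambda>n. 1 + 1 / real n) \<longlongrightarrow> 1) sequentially"
    using tendsto_add[OF tendsto_const lim_1_over_n, of "1::real"] by simp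
  show "\<forall>\<^sub>F n in sequentially. 1 < 1 + 1 / real n"
    using eventually_ge_at_top[of "1::nat"] by eventually_elim simp
qed

context hs begin

lemma part_b1: assumes d: "0 < \<delta>" "\<delta> < 1/2" and lim: "((\<lambda>r. Lambda \<delta> r * G r) \<longlongrightarrow> 0) (at_right 1)"
  shows "little_o (\<lambda>k. norm (u k)) (\<lambda>k. real k powr (-\<delta>))"
  unfolding little_o_def
proof (intro allI impI)
  fix \<epsilon> :: real assume e: "\<epsilon> > 0"
  define \<epsilon>' where "\<epsilon>' = \<epsilon>^2 / (9 * C^2)"
  have e': "\<epsilon>' > 0" unfolding \<epsilon>'_def using e C1 by simp
  have l: "((\<lambda>n. Lambda \<delta> (1 + 1/real n) * G (1 + 1/real n)) \<longlongrightarrow> 0) sequentially"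
    using filterlim_compose[OF lim rn_filterlim] by simp
  show "\<forall>\<^sub>F k in sequentially. norm (u k) \<le> \<epsilon> * real k powr - \<delta>"
    using order_tendstoD(2)[OF l e'] eventually_ge_at_top[of "1::nat"]
  proof eventually_elim
    case (elim n)
    define r where "r = 1 + 1 / real n"
    have n0: "real n > 0" using elim by simp
    have L: "Lambda \<delta> r = (1 / real n) powr (1 - 2*\<delta>)" unfolding Lambda_def r_def using d by simp
    have L1: "Lambda \<delta> r * real n powr (1 - 2*\<delta>) = 1"
      unfolding L using n0 by (simp add: powr_mult[symmetric])
    have "G r = (Lambda \<delta> r * G r) * real n powr (1 - 2*\<delta>)"
      using L1 by (simp add: mult_ac)
    also have "\<dots> \<le> \<epsilon>' * real n powr (1 - 2*\<delta>)"
      using elim(1) unfolding r_def by (intro mult_right_mono) auto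
    finally have Gb: "G r \<le> \<epsilon>' * real n powr (1 - 2*\<delta>)" .
    have p1: "(real n powr -\<delta>)^2 = real n powr (-2*\<delta>)"
      by (simp add: power2_eq_square powr_add[symmetric])
    have p2: "real n powr (1 - 2*\<delta>) = real n * real n powr (-2*\<delta>)"
      using powr_add[of "real n" 1 "-2*\<delta>"] by simp
    have "(norm (u n))^2 \<le> 9 * C^2 * G r / real n" unfolding r_def by (rule LB) (use elim in simp)
    also have "\<dots> \<le> 9 * C^2 * (\<epsilon>' * real n powr (1 - 2*\<delta>)) / real n"
      using Gb n0 by (intro divide_right_mono mult_left_mono) auto
    also have "\<dots> = (\<epsilon> * real n powr -\<delta>)^2"
      unfolding p2 power_mult_distrib p1 \<epsilon>'_def using n0 C1 by (simp add: field_simps)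
    finally show ?case by (rule power2_le_imp_le) (use e in simp)
  qed
qed

lemma part_b2: assumes lim: "((\<lambda>r. Lambda (1/2) r * G r) \<longlongrightarrow> 0) (at_right 1)"
  shows "little_o (\<lambda>k. norm (u k)) (\<lambda>k. sqrt (ln (real k) / real k))"
  unfolding little_o_def
proof (intro allI impI)
  fix \<epsilon> :: real assume e: "\<epsilon> > 0"
  define \<epsilon>' where "\<epsilon>' = \<epsilon>^2 / (9 * C^2)"
  have e': "\<epsilon>' > 0" unfolding \<epsilon>'_def using e C1 by simp
  have l: "((\<lambda>n. Lambda (1/2) (1 + 1/real n) * G (1 + 1/real n)) \<longlongrightarrow> 0) sequentially"
    using filterlim_compose[OF lim rn_filterlim] by simp
  show "\<forall>\<^sub>F k in sequentially. norm (u k) \<le> \<epsilon> * sqrt (ln (real k) / real k)"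
    using order_tendstoD(2)[OF l e'] eventually_ge_at_top[of "2::nat"]
  proof eventually_elim
    case (elim n)
    define r where "r = 1 + 1 / real n"
    have n0: "real n \<ge> 2" using elim by simp
    have ln0: "ln (real n) > 0" using n0 by simp
    have L: "Lambda (1/2) r = 1 / ln (real n)" unfolding Lambda_def r_def
      using n0 by (simp add: ln_div)
    have "G r = (Lambda (1/2) r * G r) * ln (real n)"
      using L ln0 by simp
    also have "\<dots> \<le> \<epsilon>' * ln (real n)"
      using elim(1) ln0 unfolding r_def by (intro mult_right_mono) auto
    finally have Gb: "G r \<le> \<epsilon>' * ln (real n)" .
    have "(norm (u n))^2 \<le> 9 * C^2 * G r / real n" unfolding r_def by (rule LB) (use elim in simp)
    also have "\<dots> \<le> 9 * C^2 * (\<epsilon>' * ln (real n)) / real n"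
      using Gb n0 by (intro divide_right_mono mult_left_mono) auto
    also have "\<dots> = (\<epsilon> * sqrt (ln (real n) / real n))^2"
      unfolding power_mult_distrib \<epsilon>'_def using n0 C1 ln0 by (simp add: field_simps)
    finally show ?case by (rule power2_le_imp_le) (use e ln0 n0 in simp)
  qed
qed

end

lemma powr_step: assumes s: "0 < s" "s < 1" and N: "real N \<ge> 1"
  shows "(1 - s) * real (Suc N) powr (-s) \<le> real (Suc N) powr (1 - s) - real N powr (1 - s)"
proof -
  have "\<exists>z. real N < z \<and> z < real (Suc N) \<and>
     (real (Suc N) powr (1-s) - real N powr (1-s) = (real (Suc N) - real N) * ((1-s) * z powr (1 - s - 1)))"
  proof (rule MVT2)
    fix x assume "real N \<le> x" "x \<le> real (Suc N)"
    hence "x > 0" using N by simp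
    thus "((\<lambda>x. x powr (1 - s)) has_real_derivative (1-s) * x powr (1 - s - 1)) (at x)"
      by (rule has_real_derivative_powr)
  qed simp
  then obtain z where z: "real N < z" "z < real (Suc N)"
    and eq: "real (Suc N) powr (1-s) - real N powr (1-s) = (1-s) * z powr (-s)" by auto
  have "real (Suc N) powr (-s) \<le> z powr (-s)"
    by (rule powr_mono2') (use z N s in auto)
  thus ?thesis unfolding eq using s by simp
qed

lemma sum_powr_bound: assumes s: "0 < s" "s < 1" and N: "N \<ge> 1"
  shows "(\<Sum>k\<le>N. real k powr (-s)) \<le> real N powr (1 - s) / (1 - s)"
  using N
proof (induction N rule: nat_induct_at_least)
  case base
  have "(\<Sum>k\<le>(1::nat). real k powr (-s)) = 1" by simp
  also have "1 \<le> 1 / (1 - s)" using s by simp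
  finally show ?case by simp
next
  case (Suc N)
  have "(\<Sum>k\<le>Suc N. real k powr (-s)) = (\<Sum>k\<le>N. real k powr (-s)) + real (Suc N) powr (-s)" by simp
  also have "\<dots> \<le> real N powr (1 - s) / (1 - s) + real (Suc N) powr (-s)" using Suc by simp
  also have "\<dots> = (real N powr (1-s) + (1-s) * real (Suc N) powr (-s)) / (1-s)"
    using s by (simp add: add_divide_distrib)
  also have "\<dots> \<le> real (Suc N) powr (1 - s) / (1 - s)"
    using powr_step[OF s, of N] Suc(1) s by (intro divide_right_mono) auto
  finally show ?case .
qed

lemma sum_inv_bound: assumes N: "N \<ge> 1"
  shows "(\<Sum>k\<le>N. real k powr (-1)) \<le> 1 + ln (real N)"
  using N
proof (induction N rule: nat_induct_at_least)
  case base then show ?case by simp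
next
  case (Suc N)
  have Np: "real N > 0" using Suc by simp
  have "ln (real N / real (Suc N)) \<le> real N / real (Suc N) - 1" by (rule ln_le_minus_one) (use Np in simp)
  hence st: "real (Suc N) powr (-1) \<le> ln (real (Suc N)) - ln (real N)"
    using Np by (simp add: ln_div powr_minus field_simps)
  have "(\<Sum>k\<le>Suc N. real k powr (-1)) = (\<Sum>k\<le>N. real k powr (-1)) + real (Suc N) powr (-1)" by simp
  also have "\<dots> \<le> 1 + ln (real (Suc N))" using Suc st by simp
  finally show ?case .
qed

lemma SB_summable: assumes "0 < s" "1 < r"
  shows "summable (\<lambda>k. (inverse r)^k * real k powr (-s))"
proof (rule summable_comparison_test'[where N=0])
  show "summable (\<lambda>k. (inverse r)^k)" by (rule summable_geometric) (use assms in \<open>auto simp: inverse_less_1_iff\<close>)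
  fix k :: nat
  have "real k powr (-s) \<le> 1"
  proof (cases "k = 0")
    case False
    hence "real k powr (-s) \<le> real k powr 0" by (intro powr_mono) (use assms in auto)
    thus ?thesis using False by simp
  qed simp
  thus "norm ((inverse r)^k * real k powr (-s)) \<le> (inverse r)^k"
    using assms by (simp add: abs_mult mult_left_le)
qed

lemma SB_common: assumes s: "0 < s" and r: "1 < r" "r \<le> 4/3"
  obtains N where "real N \<le> 1/(r-1)" "real N \<ge> 2/(3*(r-1))" "N \<ge> 1"
    "(\<Sum>k. (inverse r)^k * real k powr (-s)) \<le> (\<Sum>k\<le>N. real k powr (-s)) + real N powr (-s) * (r/(r-1))"
proof -
  define t where "t = r - 1"
  have t: "0 < t" "t \<le> 1/3" unfolding t_def using r by auto
  define N where "N = nat \<lfloor>1/t\<rfloor>"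
  have fl: "of_int \<lfloor>1/t\<rfloor> \<le> 1/t" "1/t < of_int \<lfloor>1/t\<rfloor> + 1" by linarith+
  have fl0: "\<lfloor>1/t\<rfloor> \<ge> 0" using t by simp
  have NN: "real N = of_int \<lfloor>1/t\<rfloor>" unfolding N_def using fl0 by simp
  have N1: "real N \<le> 1/t" using fl NN by simp
  have t3: "1/t \<ge> 3" using t by (simp add: field_simps)
  have N2: "real N \<ge> 2/(3*t)"
  proof -
    have "2/(3*t) = (2/3) * (1/t)" by simp
    also have "\<dots> \<le> 1/t - 1" using t3 by simp
    also have "\<dots> \<le> real N" using fl NN by simp
    finally show ?thesis .
  qed
  have Npos: "real N > 0" using N2 t by (smt (verit) divide_pos_pos)
  hence N0: "N \<ge> 1" by simp
  define ir where "ir = inverse r"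
  have ir: "0 < ir" "ir < 1" unfolding ir_def using r by (auto simp: inverse_less_1_iff)
  define f1 where "f1 k = (if k \<le> N then real k powr (-s) else 0)" for k
  define f2 where "f2 k = real N powr (-s) * ir^k" for k
  have f1s: "f1 sums (\<Sum>k\<le>N. real k powr (-s))"
  proof -
    have "f1 sums (\<Sum>k\<in>{..N}. f1 k)" by (rule sums_finite) (auto simp: f1_def)
    moreover have "(\<Sum>k\<in>{..N}. f1 k) = (\<Sum>k\<le>N. real k powr (-s))" by (rule sum.cong) (auto simp: f1_def)
    ultimately show ?thesis by simp
  qed
  have f2s: "f2 sums (real N powr (-s) * (1 / (1 - ir)))"
    unfolding f2_def by (intro sums_mult geometric_sums) (use ir in auto)
  have ge: "1 / (1 - ir) = r / (r - 1)" unfolding ir_def using r by (simp add: field_simps)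
  have pw: "(inverse r)^k * real k powr (-s) \<le> f1 k + f2 k" for k
  proof (cases "k \<le> N")
    case True
    have "(inverse r)^k * real k powr (-s) \<le> 1 * real k powr (-s)"
      by (intro mult_right_mono) (use ir[unfolded ir_def] in \<open>auto intro: power_le_one\<close>)
    moreover have "0 \<le> f2 k" unfolding f2_def using ir by simp
    ultimately show ?thesis using True unfolding f1_def by simp
  next
    case False
    have "real k powr (-s) \<le> real N powr (-s)" by (rule powr_mono2') (use False s Npos in auto)
    hence "(inverse r)^k * real k powr (-s) \<le> (inverse r)^k * real N powr (-s)"
      by (intro mult_left_mono) (use r in auto)
    thus ?thesis using False unfolding f1_def f2_def ir_def by (simp add: mult_ac)
  qed
  have "(\<Sum>k. (inverse r)^k * real k powr (-s)) \<le> (\<Sum>k. f1 k + f2 k)"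
    by (intro suminf_le pw SB_summable summable_add sums_summable[OF f1s] sums_summable[OF f2s]) (use s r in auto)
  also have "\<dots> = (\<Sum>k\<le>N. real k powr (-s)) + real N powr (-s) * (r/(r-1))"
    using sums_unique[OF sums_add[OF f1s f2s]] ge by simp
  finally show ?thesis using that N1 N2 N0 unfolding t_def by blast
qed

lemma SB_lt: assumes s: "0 < s" "s < 1" and r: "1 < r" "r \<le> 4/3"
  shows "(r-1) powr (1-s) * (\<Sum>k. (inverse r)^k * real k powr (-s)) \<le> 1/(1-s) + 2"
proof -
  obtain N where N1: "real N \<le> 1/(r-1)" and N2: "real N \<ge> 2/(3*(r-1))" and N0: "N \<ge> 1"
    and S: "(\<Sum>k. (inverse r)^k * real k powr (-s)) \<le> (\<Sum>k\<le>N. real k powr (-s)) + real N powr (-s) * (r/(r-1))"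
    using SB_common[OF s(1) r] by blast
  define t where "t = r - 1"
  have t: "t > 0" unfolding t_def using r by simp
  define a where "a = t powr (1-s)"
  define b where "b = t powr s"
  have ab: "a * b = t" unfolding a_def b_def using t by (simp add: powr_add[symmetric])
  have a0: "a > 0" "b > 0" unfolding a_def b_def using t by auto
  have P: "(\<Sum>k\<le>N. real k powr (-s)) \<le> (1/t) powr (1-s) / (1-s)"
  proof -
    have "(\<Sum>k\<le>N. real k powr (-s)) \<le> real N powr (1 - s) / (1 - s)" by (rule sum_powr_bound[OF s N0])
    also have "\<dots> \<le> (1/t) powr (1-s) / (1-s)"
      using s N1 unfolding t_def by (intro divide_right_mono powr_mono2) auto
    finally show ?thesis .
  qed
  have aP: "a * (1/t) powr (1-s) = 1" unfolding a_def using t by (simp add: powr_mult[symmetric])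
  have Ns: "real N powr s \<ge> (2/3) / b"
  proof -
    have "(2/3) / b = (2/3) * (1/t) powr s" unfolding b_def using t by (simp add: powr_divide)
    also have "\<dots> \<le> (2/3) powr s * (1/t) powr s"
    proof (rule mult_right_mono)
      show "2/3 \<le> (2/3::real) powr s" using powr_mono'[of s 1 "2/3::real"] s by simp
    qed simp
    also have "\<dots> = ((2/3) * (1/t)) powr s" using t by (subst powr_mult) auto
    also have "\<dots> \<le> real N powr s"
    proof (rule powr_mono2)
      show "(2/3) * (1/t) \<le> real N" using N2 unfolding t_def by simp
    qed (use s t in auto)
    finally show ?thesis .
  qed
  have Nm: "real N powr (-s) \<le> b * (3/2)"
  proof -
    have pos: "(2/3) / b > 0" using a0 by simp
    have Np: "real N powr s > 0" using pos Ns by linarith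
    have "real N powr (-s) = 1 / real N powr s" by (simp add: powr_minus divide_inverse)
    also have "\<dots> \<le> 1 / ((2/3) / b)" by (rule divide_left_mono[OF Ns]) (use pos Np in simp_all)
    also have "\<dots> = b * (3/2)" using a0 by simp
    finally show ?thesis .
  qed
  have "a * (\<Sum>k. (inverse r)^k * real k powr (-s)) \<le> a * ((\<Sum>k\<le>N. real k powr (-s)) + real N powr (-s) * (r/(r-1)))"
    using S a0 by (intro mult_left_mono) auto
  also have "\<dots> = a * (\<Sum>k\<le>N. real k powr (-s)) + a * (real N powr (-s) * (r/t))"
    unfolding t_def by (simp add: distrib_left)
  also have "\<dots> \<le> a * ((1/t) powr (1-s) / (1-s)) + a * (b * (3/2) * (r/t))"
    using P Nm a0 t r by (intro add_mono mult_left_mono mult_right_mono) auto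
  also have "\<dots> = 1/(1-s) + (a * b) * (3/2) * r / t"
    using aP by (simp add: mult_ac)
  also have "\<dots> = 1/(1-s) + (3/2) * r" using ab t by simp
  also have "\<dots> \<le> 1/(1-s) + 2" using r by simp
  finally show ?thesis unfolding a_def t_def .
qed

lemma SB_eq: assumes r: "1 < r" "r \<le> 4/3"
  shows "1 / ln (1/(r-1)) * (\<Sum>k. (inverse r)^k * real k powr (-1)) \<le> 4"
proof -
  obtain N where N1: "real N \<le> 1/(r-1)" and N2: "real N \<ge> 2/(3*(r-1))" and N0: "N \<ge> 1"
    and S: "(\<Sum>k. (inverse r)^k * real k powr (-1)) \<le> (\<Sum>k\<le>N. real k powr (-1)) + real N powr (-1) * (r/(r-1))"
    using SB_common[of 1 r] r by auto
  define t where "t = r - 1"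
  have t: "t > 0" "t \<le> 1/3" unfolding t_def using r by auto
  define L where "L = ln (1/t)"
  have L1: "L \<ge> 1"
  proof -
    have "t * exp 1 \<le> (1/3) * 3" using exp_le t by (intro mult_mono) auto
    hence "exp 1 \<le> 1/t" using t by (simp add: field_simps)
    thus ?thesis unfolding L_def using t by (simp add: ln_ge_iff)
  qed
  have "(\<Sum>k\<le>N. real k powr (-1)) \<le> 1 + ln (real N)" by (rule sum_inv_bound[OF N0])
  also have "\<dots> \<le> 1 + L" unfolding L_def t_def using N1 N0 r by (simp add: ln_le_cancel_iff)
  finally have P: "(\<Sum>k\<le>N. real k powr (-1)) \<le> 1 + L" .
  have Npos: "real N > 0" using N0 by simp
  have "real N powr (-1) * (r/(r-1)) = r / (real N * t)" unfolding t_def using Npos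
    by (simp add: powr_minus divide_inverse)
  also have "\<dots> \<le> r / (2/3)"
  proof (rule divide_left_mono)
    show "2/3 \<le> real N * t" using N2 t unfolding t_def by (simp add: field_simps)
  qed (use r t Npos in auto)
  also have "\<dots> \<le> 2" using r by simp
  finally have Q: "real N powr (-1) * (r/(r-1)) \<le> 2" .
  have "1 / L * (\<Sum>k. (inverse r)^k * real k powr (-1)) \<le> 1 / L * (1 + L + 2)"
    using S P Q L1 by (intro mult_left_mono) auto
  also have "\<dots> = 3 / L + 1" using L1 by (simp add: field_simps)
  also have "\<dots> \<le> 4" using L1 by (simp add: field_simps)
  finally show ?thesis unfolding L_def t_def .
qed

lemma shift_filterlim: "filterlim (\<lambda>r::real. r - 1) (at_right 0) (at_right 1)"
proof (rule tendsto_imp_filterlim_at_right)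
  show "((\<lambda>r::real. r - 1) \<longlongrightarrow> 0) (at_right 1)"
  proof -
    have "((\<lambda>r::real. r - 1) \<longlongrightarrow> 1 - 1) (at_right 1)" by (intro tendsto_intros)
    thus ?thesis by simp
  qed
  show "\<forall>\<^sub>F r in at_right 1. 0 < r - (1::real)"
    using eventually_at_right_less[of "1::real"] by eventually_elim simp
qed

lemma ln_part: "((\<lambda>r. 1 / \<bar>ln (r - 1)\<bar>) \<longlongrightarrow> 0) (at_right (1::real))"
proof -
  have "filterlim (\<lambda>r::real. r - 1) (at_right 0) (at_right 1)"
  proof (rule tendsto_imp_filterlim_at_right)
    have "((\<lambda>r::real. r - 1) \<longlongrightarrow> 1 - 1) (at_right 1)" by (intro tendsto_intros)
    thus "((\<lambda>r::real. r - 1) \<longlongrightarrow> 0) (at_right 1)" by simp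
    show "\<forall>\<^sub>F r in at_right 1. 0 < r - (1::real)"
      using eventually_at_right_less[of "1::real"] by eventually_elim simp
  qed
  hence "filterlim (\<lambda>r. ln (r - 1)) at_bot (at_right (1::real))"
    by (rule filterlim_compose[OF ln_at_0])
  hence "filterlim (\<lambda>r. - ln (r - 1)) at_top (at_right (1::real))"
    by (rule filterlim_compose[OF filterlim_uminus_at_top_at_bot])
  hence l: "((\<lambda>r. inverse (- ln (r - 1))) \<longlongrightarrow> 0) (at_right (1::real))"
    by (rule tendsto_inverse_0_at_top)
  have ev: "eventually (\<lambda>r. r \<in> {1<..<2}) (at_right (1::real))"
    by (rule eventually_at_right_real) simp
  have ev2: "\<forall>\<^sub>F r in at_right (1::real). inverse (- ln (r - 1)) = 1 / \<bar>ln (r - 1)\<bar>"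
  proof (rule eventually_mono[OF ev])
    fix r :: real assume "r \<in> {1<..<2}"
    hence "ln (r - 1) < 0" by simp
    thus "inverse (- ln (r - 1)) = 1 / \<bar>ln (r - 1)\<bar>" by (simp add: divide_inverse)
  qed
  show ?thesis by (rule Lim_transform_eventually[OF l ev2])
qed

lemma Lambda_tendsto: assumes "0 < \<delta>" "\<delta> \<le> 1/2" shows "(Lambda \<delta> \<longlongrightarrow> 0) (at_right 1)"
proof (cases "\<delta> = 1/2")
  case True
  have "Lambda \<delta> = (\<lambda>r. 1 / \<bar>ln (r - 1)\<bar>)" unfolding Lambda_def True by simp
  thus ?thesis using ln_part by simp
next
  case False
  have l: "((\<lambda>r. (r - 1) powr (1 - 2*\<delta>)) \<longlongrightarrow> 0) (at_right (1::real))"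
  proof (rule tendsto_zero_powrI)
    have "((\<lambda>r::real. r - 1) \<longlongrightarrow> 1 - 1) (at_right 1)" by (intro tendsto_intros)
    thus "((\<lambda>r::real. r - 1) \<longlongrightarrow> 0) (at_right 1)" by simp
    show "\<forall>\<^sub>F r in at_right 1. 0 \<le> r - (1::real)"
      using eventually_at_right_less[of "1::real"] by eventually_elim simp
    show "((\<lambda>r::real. 1 - 2*\<delta>) \<longlongrightarrow> 1 - 2*\<delta>) (at_right 1)" by simp
    show "0 < 1 - 2*\<delta>" using assms False by simp
  qed
  have "Lambda \<delta> = (\<lambda>r. (r - 1) powr (1 - 2*\<delta>))" unfolding Lambda_def using False by simp
  thus ?thesis using l by simp
qed

lemma Lambda_nonneg: "r > 1 \<Longrightarrow> 0 \<le> Lambda \<delta> r"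
  unfolding Lambda_def by auto

lemma Lambda_S: assumes d: "0 < \<delta>" "\<delta> \<le> 1/2" and r: "1 < r" "r \<le> 4/3"
  shows "Lambda \<delta> r * (\<Sum>k. (inverse r)^k * real k powr (-(2*\<delta>))) \<le> (if \<delta> = 1/2 then 4 else 1/(1-2*\<delta>) + 2)"
proof (cases "\<delta> = 1/2")
  case True
  have "\<bar>ln (r - 1)\<bar> = ln (1/(r-1))" using r by (simp add: ln_div)
  thus ?thesis using SB_eq[OF r] unfolding Lambda_def True by simp
next
  case False
  thus ?thesis using SB_lt[of "2*\<delta>" r] d r unfolding Lambda_def by simp
qed

context hs begin

lemma part_a: assumes d: "0 < \<delta>" "\<delta> \<le> 1/2"
  and lo: "little_o (\<lambda>k. norm (u k)) (\<lambda>k. real k powr (-\<delta>))"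
  shows "((\<lambda>r. Lambda \<delta> r * G r) \<longlongrightarrow> 0) (at_right 1)"
proof (rule order_tendstoI)
  fix a :: real assume a: "a < 0"
  show "\<forall>\<^sub>F r in at_right 1. a < Lambda \<delta> r * G r"
    using eventually_at_right_less[of "1::real"]
  proof eventually_elim
    case (elim r) thus ?case using a Lambda_nonneg[OF elim] G_nonneg[OF elim] by (smt (verit) mult_nonneg_nonneg)
  qed
next
  fix e :: real assume e: "e > 0"
  define s where "s = 2 * \<delta>"
  define K where "K = (if \<delta> = 1/2 then 4 else 1/(1-2*\<delta>) + 2)"
  have K0: "K > 0"
  proof (cases "\<delta> = 1/2")
    case False
    hence "1 - 2*\<delta> > 0" using d by simp
    hence "1/(1-2*\<delta>) > 0" by simp
    thus ?thesis unfolding K_def if_not_P[OF False] by linarith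
  qed (simp add: K_def)
  define \<epsilon> where "\<epsilon> = min 1 (e / (2*K+2))"
  have ep: "0 < \<epsilon>" "\<epsilon> \<le> 1" "\<epsilon> \<le> e / (2*K+2)" unfolding \<epsilon>_def using e K0 by auto
  have epK: "\<epsilon>^2 * K < e/2"
  proof -
    have "\<epsilon>^2 * K \<le> \<epsilon> * K" using ep K0 by (intro mult_right_mono) (auto simp: power2_eq_square mult_left_le)
    also have "\<dots> \<le> e / (2*K+2) * K" using ep K0 by (intro mult_right_mono) auto
    also have "\<dots> < e/2" using e K0 by (simp add: field_simps)
    finally show ?thesis .
  qed
  obtain N0 where N0: "\<And>k. k \<ge> N0 \<Longrightarrow> norm (u k) \<le> \<epsilon> * real k powr (-\<delta>)"
    using lo ep(1) unfolding little_o_def eventually_sequentially by blast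
  define A where "A = (\<Sum>k<N0. (norm (u k))^2)"
  have "((\<lambda>r. Lambda \<delta> r * A) \<longlongrightarrow> 0 * A) (at_right 1)"
    by (intro tendsto_mult Lambda_tendsto d tendsto_const)
  hence ev1: "\<forall>\<^sub>F r in at_right 1. Lambda \<delta> r * A < e/2"
    using e by (intro order_tendstoD(2)) auto
  have ev2: "eventually (\<lambda>r. r \<in> {1<..<4/3}) (at_right (1::real))"
    by (rule eventually_at_right_real) simp
  show "\<forall>\<^sub>F r in at_right 1. Lambda \<delta> r * G r < e"
    using ev1 ev2
  proof eventually_elim
    case (elim r)
    have r: "1 < r" "r \<le> 4/3" using elim(2) by auto
    have ir: "0 \<le> inverse r" "inverse r \<le> 1" using r by (auto simp: inverse_le_1_iff)
    define f1 where "f1 k = (if k < N0 then (norm (u k))^2 else 0)" for k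
    define f2 where "f2 k = \<epsilon>^2 * ((inverse r)^k * real k powr (-s))" for k
    have f1s: "f1 sums A"
    proof -
      have "f1 sums (\<Sum>k\<in>{..<N0}. f1 k)" by (rule sums_finite) (auto simp: f1_def)
      moreover have "(\<Sum>k\<in>{..<N0}. f1 k) = A" unfolding A_def by (rule sum.cong) (auto simp: f1_def)
      ultimately show ?thesis by simp
    qed
    have SS: "summable (\<lambda>k. (inverse r)^k * real k powr (-s))"
      by (rule SB_summable) (use d r in \<open>auto simp: s_def\<close>)
    have f2s: "f2 sums (\<epsilon>^2 * (\<Sum>k. (inverse r)^k * real k powr (-s)))"
      unfolding f2_def by (intro sums_mult summable_sums SS)
    have pw: "(inverse r)^(2*k+2) * (norm (u k))^2 \<le> f1 k + f2 k" for k
    proof (cases "k < N0")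
      case True
      have "(inverse r)^(2*k+2) * (norm (u k))^2 \<le> 1 * (norm (u k))^2"
        by (intro mult_right_mono power_le_one ir) auto
      moreover have "0 \<le> f2 k" unfolding f2_def using ir by simp
      ultimately show ?thesis using True unfolding f1_def by simp
    next
      case False
      have "norm (u k) \<le> \<epsilon> * real k powr (-\<delta>)" using N0 False by simp
      hence "(norm (u k))^2 \<le> (\<epsilon> * real k powr (-\<delta>))^2" by (intro power_mono) auto
      also have "\<dots> = \<epsilon>^2 * real k powr (-s)"
        by (simp add: power_mult_distrib power2_eq_square powr_add[symmetric] s_def)
      finally have a2: "(norm (u k))^2 \<le> \<epsilon>^2 * real k powr (-s)" .
      have "(inverse r)^(2*k+2) \<le> (inverse r)^k" by (rule power_decreasing) (use ir in auto)
      hence "(inverse r)^(2*k+2) * (norm (u k))^2 \<le> (inverse r)^k * (\<epsilon>^2 * real k powr (-s))"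
        using a2 ir by (intro mult_mono) auto
      thus ?thesis using False unfolding f1_def f2_def by (simp add: mult_ac)
    qed
    have "G r \<le> (\<Sum>k. f1 k + f2 k)"
      unfolding G_def
      by (intro suminf_le pw G_summable summable_add sums_summable[OF f1s] sums_summable[OF f2s]) (use r in auto)
    also have "\<dots> = A + \<epsilon>^2 * (\<Sum>k. (inverse r)^k * real k powr (-s))"
      using sums_unique[OF sums_add[OF f1s f2s]] by simp
    finally have GB: "G r \<le> A + \<epsilon>^2 * (\<Sum>k. (inverse r)^k * real k powr (-s))" .
    have L0: "0 \<le> Lambda \<delta> r" by (rule Lambda_nonneg) (use r in simp)
    have "Lambda \<delta> r * G r \<le> Lambda \<delta> r * (A + \<epsilon>^2 * (\<Sum>k. (inverse r)^k * real k powr (-s)))"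
      using GB L0 by (intro mult_left_mono) auto
    also have "\<dots> = Lambda \<delta> r * A + \<epsilon>^2 * (Lambda \<delta> r * (\<Sum>k. (inverse r)^k * real k powr (-s)))"
      by (simp add: algebra_simps)
    also have "\<dots> \<le> Lambda \<delta> r * A + \<epsilon>^2 * K"
      using Lambda_S[OF d r] unfolding K_def s_def by (intro add_left_mono mult_left_mono) auto
    also have "\<dots> < e" using elim(1) epK by simp
    finally show ?case .
  qed
qed

end

context hs begin
lemma cond_iff: "resolvent_cond J D x \<delta> \<longleftrightarrow> ((\<lambda>r. Lambda \<delta> r * G r) \<longlongrightarrow> 0) (at_right 1)"
proof -
  have ev: "\<forall>\<^sub>F r in at_right 1. Lambda \<delta> r * integral {0..2*pi}
          (\<lambda>\<theta>. (norm (resolvent J (complex_of_real r * cis \<theta>) D x))\<^sup>2) = (2*pi) * (Lambda \<delta> r * G r)"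
    using eventually_at_right_less[of "1::real"]
    by eventually_elim (simp add: key)
  have "resolvent_cond J D x \<delta> \<longleftrightarrow> ((\<lambda>r. (2*pi) * (Lambda \<delta> r * G r)) \<longlongrightarrow> 0) (at_right 1)"
    unfolding resolvent_cond_def by (rule tendsto_cong[OF ev])
  also have "\<dots> \<longleftrightarrow> ((\<lambda>r. Lambda \<delta> r * G r) \<longlongrightarrow> 0) (at_right 1)"
  proof
    assume "((\<lambda>r. (2*pi) * (Lambda \<delta> r * G r)) \<longlongrightarrow> 0) (at_right 1)"
    from tendsto_mult_left[OF this, of "1/(2*pi)"] show "((\<lambda>r. Lambda \<delta> r * G r) \<longlongrightarrow> 0) (at_right 1)"
      by simp
  next
    assume "((\<lambda>r. Lambda \<delta> r * G r) \<longlongrightarrow> 0) (at_right 1)"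
    from tendsto_mult_left[OF this, of "2*pi"] show "((\<lambda>r. (2*pi) * (Lambda \<delta> r * G r)) \<longlongrightarrow> 0) (at_right 1)"
      by simp
  qed
  finally show ?thesis .
qed
end

theorem mainTheorem3:
  fixes J :: "'a::{real_inner, complete_space} \<Rightarrow> 'a"
    and D :: "'a \<Rightarrow>\<^sub>L 'a" and x :: 'a
  assumes "complex_structure J"
    and "complex_linear_op J D"
    and "power_bounded D"
  shows "(\<forall>\<delta>. 0 < \<delta> \<and> \<delta> \<le> 1/2 \<and>
              little_o (\<lambda>k. norm ((blinfun_apply D ^^ k) x)) (\<lambda>k. real k powr (-\<delta>))
            \<longrightarrow> resolvent_cond J D x \<delta>)
       \<and> (\<forall>\<delta>. 0 < \<delta> \<and> \<delta> < 1/2 \<and> resolvent_cond J D x \<delta>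
            \<longrightarrow> little_o (\<lambda>k. norm ((blinfun_apply D ^^ k) x)) (\<lambda>k. real k powr (-\<delta>)))
       \<and> (resolvent_cond J D x (1/2)
            \<longrightarrow> little_o (\<lambda>k. norm ((blinfun_apply D ^^ k) x)) (\<lambda>k. sqrt (ln (real k) / real k)))"
proof -
  obtain C0 where C0: "\<And>k y. norm ((blinfun_apply D ^^ k) y) \<le> C0 * norm y"
    using assms(3) unfolding power_bounded_def by blast
  define C where "C = max C0 1"
  have pbC: "norm ((blinfun_apply D ^^ k) y) \<le> C * norm y" for k y
  proof -
    have "C0 * norm y \<le> C * norm y" unfolding C_def by (intro mult_right_mono) auto
    thus ?thesis using C0[of k y] by linarith
  qed
  interpret hs J D x C
    by unfold_locales (use assms pbC in \<open>auto simp: C_def\<close>)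
  have un: "(\<lambda>k. norm ((blinfun_apply D ^^ k) x)) = (\<lambda>k. norm (u k))" by (simp add: u_def)
  show ?thesis unfolding un cond_iff
    using part_a part_b1 part_b2 by blast
qed

end
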